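(* Let $f:\mathbb{N}\to\mathbb{R}$ be a function with the following property: for every positive integer $h$, every asymptotic basis $A$ with $G(A)\le h$, and every finite subset $X\subseteq A$ such that $A\setminus X$ is an asymptotic basis (i.e. $G(A\setminus X)<\infty$), one has $$G(A\setminus X)\le d(X)\cdot f(h).$$ Then $\liminf_{h\to\infty} f(h)/h^3 \ge 1/27$.
   Context: All sets are sets of integers $A\subseteq\mathbb{Z}$ with $|A\cap\mathbb{Z}_{<0}|<\infty$. Such a set $A$ is an asymptotic basis if for some positive integer $h$ the $h$-fold sumset $hA=\{a_1+\dots+a_h: a_i\in A\}$ contains all but finitely many non-negative integers; the least such $h$ is the order $G(A)$ (and $G(A)=\infty$ if no such $h$ exists). For a finite set $X$ of integers with at least two elements, $\mathrm{diam}(X)=\max X-\min X$, $\delta(X)=\gcd\{x-y: x,y\in X\}$, and $d(X)=\mathrm{diam}(X)/\delta(X)$. *)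

theory Defs
  imports "HOL-Analysis.Analysis" "HOL-Library.Extended_Nat"
begin

definition admissible :: "int set \<Rightarrow> bool" where
  "admissible A \<longleftrightarrow> finite {a \<in> A. a < 0}"

definition sumset :: "nat \<Rightarrow> int set \<Rightarrow> int set" where
  "sumset h A = {sum_list xs | xs. length xs = h \<and> set xs \<subseteq> A}"

definition basis_of_order :: "nat \<Rightarrow> int set \<Rightarrow> bool" where
  "basis_of_order h A \<longleftrightarrow> finite {n::int. 0 \<le> n \<and> n \<notin> sumset h A}"

definition G :: "int set \<Rightarrow> enat" where
  "G A = (if \<exists>h>0. basis_of_order h A
          then enat (LEAST h. 0 < h \<and> basis_of_order h A) else \<infinity>)"

definition diam :: "int set \<Rightarrow> int" where
  "diam X = Max X - Min X"

definition delta :: "int set \<Rightarrow> int" where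
  "delta X = Gcd {x - y | x y. x \<in> X \<and> y \<in> X}"

definition dnorm :: "int set \<Rightarrow> real" where
  "dnorm X = real_of_int (diam X) / real_of_int (delta X)"

end

theory Submission
  imports Defs
begin

definition BB :: "nat \<Rightarrow> int set" where
  "BB M = {0,1} \<union> {int M * k | k. k \<ge> 0}"

lemma sum_B:
  "set xs \<subseteq> BB M \<Longrightarrow> \<exists>c t. sum_list xs = c + int M * t \<and> 0 \<le> c \<and> c \<le> int (length xs)
     \<and> 0 \<le> t \<and> (t > 0 \<longrightarrow> c < int (length xs))"
proof (induction xs)
  case Nil
  show ?case by (rule exI[of _ 0], rule exI[of _ 0]) simp
next
  case (Cons x xs)
  then obtain c t where ct: "sum_list xs = c + int M * t" "0 \<le> c" "c \<le> int (length xs)"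
     "0 \<le> t" "t > 0 \<longrightarrow> c < int (length xs)" by auto
  have "x \<in> BB M" using Cons by auto
  then consider "x = 0" | "x = 1" | k where "x = int M * k" "k \<ge> 0" unfolding BB_def by auto
  then show ?case
  proof cases
    case 1 then show ?thesis using ct by (intro exI[of _ c] exI[of _ t]) auto
  next
    case 2 then show ?thesis using ct by (intro exI[of _ "c+1"] exI[of _ t]) auto
  next
    case 3 then show ?thesis using ct
      by (intro exI[of _ c] exI[of _ "t+k"]) (auto simp: algebra_simps)
  qed
qed

lemma not_basis_B:
  assumes "0 < h" "h < M"
  shows "\<not> basis_of_order h (BB M)"
proof
  assume fin: "basis_of_order h (BB M)"
  define g where "g = (\<lambda>n::nat. int M * (int n + 1) + int M - 1)"
  have mem: "0 \<le> g n \<and> g n \<notin> sumset h (BB M)" for n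
  proof -
    have "0 \<le> int M * (int n + 1)" by simp
    then have g0: "0 \<le> g n" using assms unfolding g_def by linarith
    have "g n \<notin> sumset h (BB M)"
    proof
    assume "g n \<in> sumset h (BB M)"
    then obtain xs where xs: "length xs = h" "set xs \<subseteq> BB M" "sum_list xs = g n"
      unfolding sumset_def by auto
    obtain c t where ct: "sum_list xs = c + int M * t" "0 \<le> c" "c \<le> int (length xs)"
     "0 \<le> t" "t > 0 \<longrightarrow> c < int (length xs)" using sum_B[OF xs(2)] by blast
    define j where "j = int n + 1"
    have eq: "int M * (t - j) = int M - 1 - c" using ct xs unfolding g_def j_def
      by (simp add: algebra_simps)
    have "t = j"
    proof (rule ccontr)
      assume "t \<noteq> j"
      then consider "t - j \<ge> 1" | "t - j \<le> -1" by linarith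
      then show False
      proof cases
        case 1
        then have "int M * (t - j) \<ge> int M * 1" by (intro mult_left_mono) auto
        then show ?thesis using eq ct by linarith
      next
        case 2
        then have "int M * (t - j) \<le> int M * (-1)" by (intro mult_left_mono) auto
        then show ?thesis using eq ct xs assms by linarith
      qed
    qed
    then have "c = int M - 1" using eq by simp
    moreover have "t > 0" using \<open>t = j\<close> j_def by simp
    ultimately show False using ct xs assms by auto
    qed
    then show ?thesis using g0 by simp
  qed
  have sub: "range g \<subseteq> {n::int. 0 \<le> n \<and> n \<notin> sumset h (BB M)}" using mem by auto
  have ig: "inj g"
  proof (rule injI)
    fix x y assume "g x = g y"
    then have "int M * (int x + 1) = int M * (int y + 1)" by (simp add: g_def)
    then show "x = y" using assms by simp
  qed
  have inf: "infinite (range g)" using ig by (rule range_inj_infinite)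
  have "infinite {n::int. 0 \<le> n \<and> n \<notin> sumset h (BB M)}"
    by (rule infinite_super[OF sub inf])
  then show False using fin unfolding basis_of_order_def by simp
qed

lemma basis_B:
  assumes "0 < M"
  shows "basis_of_order M (BB M)"
proof -
  have "n \<in> sumset M (BB M)" if "0 \<le> n" for n
  proof -
    define q where "q = n div int M"
    define r where "r = n mod int M"
    have r: "0 \<le> r" "r < int M" using assms unfolding r_def by auto
    have n: "n = r + int M * q" unfolding q_def r_def by simp
    have q: "q \<ge> 0" using that assms unfolding q_def by (simp add: pos_imp_zdiv_nonneg_iff)
    define xs where "xs = replicate (nat r) (1::int) @ [int M * q] @ replicate (M - 1 - nat r) 0"
    have "length xs = M" unfolding xs_def using r by auto
    moreover have "set xs \<subseteq> BB M" unfolding xs_def BB_def using q by auto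
    moreover have "sum_list xs = n" unfolding xs_def n using r by (simp add: sum_list_replicate)
    ultimately show ?thesis unfolding sumset_def by blast
  qed
  then have E: "{n::int. 0 \<le> n \<and> n \<notin> sumset M (BB M)} = {}" by auto
  show ?thesis unfolding basis_of_order_def E by (rule finite.emptyI)
qed

lemma G_B:
  assumes "0 < M"
  shows "G (BB M) = enat M"
proof -
  have ex: "\<exists>h>0. basis_of_order h (BB M)" using basis_B assms by blast
  have "(LEAST h. 0 < h \<and> basis_of_order h (BB M)) = M"
  proof (rule Least_equality)
    show "0 < M \<and> basis_of_order M (BB M)" using assms basis_B by blast
    fix y assume "0 < y \<and> basis_of_order y (BB M)"
    then have yb: "0 < y" "basis_of_order y (BB M)" by auto
    show "M \<le> y"
    proof (rule ccontr)
      assume "\<not> M \<le> y"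
      then have "y < M" by simp
      then show False using not_basis_B[of y M] yb by blast
    qed
  qed
  then show ?thesis unfolding G_def using ex by simp
qed

definition AA :: "nat \<Rightarrow> int set" where
  "AA s = {0, 1, int s, int s ^ 2} \<union> {int (s ^ 3) * k | k. k \<ge> 0}"

lemma basis_A:
  assumes "1 \<le> s" "3 * s \<le> h + 2"
  shows "basis_of_order h (AA s)"
proof -
  define S where "S = int s"
  have S: "1 \<le> S" using assms unfolding S_def by simp
  have "n \<in> sumset h (AA s)" if "0 \<le> n" for n
  proof -
    define M where "M = S ^ 3"
    have M: "M > 0" using S unfolding M_def by simp
    define q where "q = n div M"
    define r where "r = n mod M"
    have r: "0 \<le> r" "r < M" using M unfolding r_def by auto
    have n: "n = r + M * q" unfolding q_def r_def by simp
    have q: "q \<ge> 0" using that M unfolding q_def by (simp add: pos_imp_zdiv_nonneg_iff)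
    define a where "a = r mod S"
    define b where "b = (r div S) mod S"
    define c where "c = r div S div S"
    have a: "0 \<le> a" "a < S" using S unfolding a_def by auto
    have b: "0 \<le> b" "b < S" using S unfolding b_def by auto
    have c0: "0 \<le> c" using S r unfolding c_def by (simp add: pos_imp_zdiv_nonneg_iff)
    have r1: "r = a + S * (r div S)" unfolding a_def by simp
    have r2: "r div S = b + S * c" unfolding b_def c_def by simp
    have rr: "r = a + S * b + S * S * c" using r1 r2 by (simp add: algebra_simps)
    have c: "c < S"
    proof (rule ccontr)
      assume "\<not> c < S"
      then have "S * S * c \<ge> S * S * S" by (intro mult_left_mono) auto
      moreover have "S * b \<ge> 0" using b S by simp
      ultimately have "r \<ge> S * S * S" using rr a by linarith
      then show False using r unfolding M_def by (simp add: power3_eq_cube)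
    qed
    have len: "nat a + nat b + nat c + 1 \<le> h" using a b c assms unfolding S_def by linarith
    define xs where "xs = replicate (nat a) 1 @ replicate (nat b) S @ replicate (nat c) (S ^ 2)
        @ [M * q] @ replicate (h - (nat a + nat b + nat c + 1)) 0"
    have "length xs = h" unfolding xs_def using len by auto
    moreover have "set xs \<subseteq> AA s" unfolding xs_def AA_def M_def S_def using q by auto
    moreover have "sum_list xs = n" unfolding xs_def n rr using a b c0
      by (simp add: sum_list_replicate power2_eq_square algebra_simps)
    ultimately show ?thesis unfolding sumset_def by blast
  qed
  then have E: "{n::int. 0 \<le> n \<and> n \<notin> sumset h (AA s)} = {}" by auto
  show ?thesis unfolding basis_of_order_def E by (rule finite.emptyI)
qed

lemma key:
  fixes f :: "nat \<Rightarrow> real"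
  assumes hyp: "\<And>h A X k. 0 < h \<Longrightarrow> admissible A \<Longrightarrow> G A \<le> enat h \<Longrightarrow>
      finite X \<Longrightarrow> X \<subseteq> A \<Longrightarrow> 2 \<le> card X \<Longrightarrow> G (A - X) = enat k \<Longrightarrow>
      real k \<le> dnorm X * f h"
  and h: "4 \<le> h"
  shows "real h ^ 3 / 27 \<le> f h"
proof -
  define s where "s = (h + 2) div 3"
  have s2: "2 \<le> s" using h unfolding s_def by simp
  have s3: "3 * s \<le> h + 2" "h \<le> 3 * s" unfolding s_def by auto
  define S where "S = int s"
  have S: "2 \<le> S" using s2 unfolding S_def by simp
  define X where "X = {S, S ^ 2}"
  have SS: "S < S ^ 2" using S by (simp add: power2_eq_square)
  have SSS: "S ^ 2 < int (s ^ 3)" using S unfolding S_def by (simp add: power2_eq_square power3_eq_cube)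
  have nn: "0 \<le> a" if "a \<in> AA s" for a
    using that unfolding AA_def by (auto intro: mult_nonneg_nonneg)
  have E: "{a \<in> AA s. a < 0} = {}" using nn by fastforce
  have adm: "admissible (AA s)" unfolding admissible_def E by (rule finite.emptyI)
  have bA: "basis_of_order h (AA s)" using basis_A[of s h] s2 s3 by simp
  have GA: "G (AA s) \<le> enat h"
  proof -
    have ex: "\<exists>h>0. basis_of_order h (AA s)" using bA h by (intro exI[of _ h]) simp
    have "(LEAST h. 0 < h \<and> basis_of_order h (AA s)) \<le> h" using bA h by (intro Least_le) simp
    then show ?thesis unfolding G_def using ex by simp
  qed
  have notmult: "x \<noteq> int (s ^ 3) * k" if "0 < x" "x < int (s ^ 3)" "0 \<le> k" for x k
  proof
    assume eq: "x = int (s ^ 3) * k"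
    show False
    proof (cases "k = 0")
      case True then show ?thesis using eq that by simp
    next
      case False
      then have "int (s ^ 3) * 1 \<le> int (s ^ 3) * k" using that by (intro mult_left_mono) auto
      then show ?thesis using eq that by simp
    qed
  qed
  have SSS': "S < int (s ^ 3)" using SS SSS by linarith
  have diff: "AA s - X = BB (s ^ 3)"
    unfolding AA_def BB_def X_def S_def[symmetric]
    using SS S SSS SSS' notmult[of S] notmult[of "S^2"] notmult[of S, THEN not_sym] notmult[of "S^2", THEN not_sym]
    by auto
  have GB: "G (AA s - X) = enat (s ^ 3)" unfolding diff using s2 by (intro G_B) simp
  have cardX: "card X = 2" unfolding X_def using SS by simp
  have XA: "X \<subseteq> AA s" unfolding X_def AA_def S_def by auto
  have dset: "{x - y | x y. x \<in> X \<and> y \<in> X} = {0, S^2 - S, S - S^2}"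
    unfolding X_def by auto
  have "delta X = S ^ 2 - S" unfolding delta_def dset using SS by simp
  moreover have "diam X = S ^ 2 - S" unfolding diam_def X_def using SS by simp
  ultimately have dn: "dnorm X = 1" unfolding dnorm_def using SS by simp
  have "real (s ^ 3) \<le> dnorm X * f h"
    using hyp[OF _ adm GA _ XA _ GB] h cardX unfolding X_def by simp
  then have "real s ^ 3 \<le> f h" using dn by simp
  moreover have "real h ^ 3 / 27 \<le> real s ^ 3"
  proof -
    have "real h / 3 \<le> real s" using s3 by simp
    then have "(real h / 3) ^ 3 \<le> real s ^ 3" by (intro power_mono) auto
    then show ?thesis by (simp add: power_divide)
  qed
  ultimately show ?thesis by linarith
qed

lemma L1:
  fixes f :: "nat \<Rightarrow> real"
  assumes k: "\<And>h. 4 \<le> h \<Longrightarrow> real h ^ 3 / 27 \<le> f h"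
  shows "Liminf sequentially (\<lambda>h. ereal (f h / real h ^ 3)) \<ge> ereal (1/27)"
proof (rule Liminf_bounded)
  have "ereal (1/27) \<le> ereal (f h / real h ^ 3)" if h: "4 \<le> h" for h
  proof -
    have pos: "0 < real h ^ 3" using h by simp
    have "1/27 * real h ^ 3 \<le> f h" using k[OF h] by simp
    then have "1/27 \<le> f h / real h ^ 3" by (simp add: pos_le_divide_eq[OF pos])
    then show ?thesis by simp
  qed
  then show "\<forall>\<^sub>F h in sequentially. ereal (1/27) \<le> ereal (f h / real h ^ 3)"
    unfolding eventually_sequentially by blast
qed
theorem theorem1p2:
  fixes f :: "nat \<Rightarrow> real"
  assumes hyp: "\<And>h A X k. 0 < h \<Longrightarrow> admissible A \<Longrightarrow> G A \<le> enat h \<Longrightarrow>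
      finite X \<Longrightarrow> X \<subseteq> A \<Longrightarrow> 2 \<le> card X \<Longrightarrow> G (A - X) = enat k \<Longrightarrow>
      real k \<le> dnorm X * f h"
  shows "Liminf sequentially (\<lambda>h. ereal (f h / real h ^ 3)) \<ge> ereal (1/27)"
proof (rule L1)
  fix h :: nat assume h: "4 \<le> h"
  show "real h ^ 3 / 27 \<le> f h" by (rule key[OF hyp h])
qed

end
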